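(* Let $\mathrm{GNN}$ be a node-most-expressive GNN and let $\mathrm{AGG}$ be an injective function on finite multisets of node representations. Fix a labeling trick, and for a node set $S$ and graph tensor ${\mathcal A}$ write ${\mathcal A}^{(S)}$ for the labeled graph it produces. Define $\mathrm{GNN}(S,{\mathcal A}^{(S)}) := \mathrm{AGG}(\{\mathrm{GNN}(i,{\mathcal A}^{(S)}) \mid i\in S\})$. Then for all $n$-node graph tensors ${\mathcal A},{\mathcal A}'$ and all node sets $S,S'\subseteq\{1,\dots,n\}$, $$\mathrm{GNN}(S,{\mathcal A}^{(S)}) = \mathrm{GNN}(S',{\mathcal A}'^{(S')}) \iff (S,{\mathcal A}) \simeq (S',{\mathcal A}').$$
   Context: A graph on node set $V=\{1,\dots,n\}$ is encoded by a tensor ${\mathcal A}\in\mathbb R^{n\times n\times k}$: ${\mathcal A}_{i,i,:}$ are the features of node $i$, ${\mathcal A}_{i,j,:}$ ($i\ne j$) the features of edge $(i,j)$, and the first slice ${\mathcal A}_{:,:,1}$ is the adjacency matrix (if there are no features, ${\mathcal A}$ is the adjacency matrix). A permutation $\pi$ of $\{1,\dots,n\}$ acts by $\pi(S)=\{\pi(i):i\in S\}$ and $\pi({\mathcal A})_{\pi(i),\pi(j),:}={\mathcal A}_{i,j,:}$. Set isomorphism: $(S,{\mathcal A})\simeq(S',{\mathcal A}')$ iff there is a permutation $\pi$ with $S=\pi(S')$ and ${\mathcal A}=\pi({\mathcal A}')$; for a single node we write $(i,{\mathcal A})$ for $(\{i\},{\mathcal A})$. A GNN is a map $(i,{\mathcal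 A})\mapsto \mathrm{GNN}(i,{\mathcal A})$ (defined for graph tensors with any number of feature channels); it is node-most-expressive if for all $i,{\mathcal A},j,{\mathcal A}'$: $\mathrm{GNN}(i,{\mathcal A})=\mathrm{GNN}(j,{\mathcal A}')\iff (i,{\mathcal A})\simeq(j,{\mathcal A}')$. A labeling trick assigns to each $(S,{\mathcal A})$ a labeling tensor ${\mathcal L}^{(S)}\in\mathbb R^{n\times n\times d}$, and ${\mathcal A}^{(S)}\in\mathbb R^{n\times n\times(k+d)}$ is obtained by stacking ${\mathcal L}^{(S)}$ onto ${\mathcal A}$ along the third dimension; it must satisfy, for all $S,{\mathcal A},S',{\mathcal A}'$ and permutations $\pi$: (1) ${\mathcal L}^{(S)}=\pi({\mathcal L}^{(S')})\Rightarrow S=\pi(S')$, and (2) $S=\pi(S')$ and ${\mathcal A}=\pi({\mathcal A}')\Rightarrow {\mathcal L}^{(S)}=\pi({\mathcal L}^{(S')})$. *)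

theory Defs
  imports Complex_Main "HOL-Library.Multiset" "HOL-Combinatorics.Permutations"
begin

text \<open>A graph tensor on node set {1..n} with k feature channels is represented as a
  function giving, for each pair (i,j), the feature vector A_{i,j,:} as a list of
  length k; outside {1..n} x {1..n} the value is the empty list (canonical form).\<close>

type_synonym gtensor = "nat \<Rightarrow> nat \<Rightarrow> real list"

definition is_tensor :: "nat \<Rightarrow> nat \<Rightarrow> gtensor \<Rightarrow> bool" where
  "is_tensor n k A \<longleftrightarrow>
     (\<forall>i j. (i \<in> {1..n} \<and> j \<in> {1..n} \<longrightarrow> length (A i j) = k) \<and>
            (\<not> (i \<in> {1..n} \<and> j \<in> {1..n}) \<longrightarrow> A i j = []))"

definition graph_tensor :: "nat \<Rightarrow> nat \<Rightarrow> gtensor \<Rightarrow> bool" where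
  "graph_tensor n k A \<longleftrightarrow> 1 \<le> k \<and> is_tensor n k A \<and>
     (\<forall>i\<in>{1..n}. \<forall>j\<in>{1..n}. A i j ! 0 \<in> {0, 1})"

text \<open>Permutation action: pi(A)_{pi i, pi j} = A_{i,j}.\<close>
definition perm_tensor :: "(nat \<Rightarrow> nat) \<Rightarrow> gtensor \<Rightarrow> gtensor" where
  "perm_tensor \<pi> A = (\<lambda>i j. A (inv \<pi> i) (inv \<pi> j))"

definition set_iso :: "nat \<Rightarrow> nat set \<Rightarrow> gtensor \<Rightarrow> nat set \<Rightarrow> gtensor \<Rightarrow> bool" where
  "set_iso n S A S' A' \<longleftrightarrow>
     (\<exists>\<pi>. \<pi> permutes {1..n} \<and> S = \<pi> ` S' \<and> A = perm_tensor \<pi> A')"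

definition node_most_expressive :: "nat \<Rightarrow> (nat \<Rightarrow> gtensor \<Rightarrow> 'r) \<Rightarrow> bool" where
  "node_most_expressive n GNN \<longleftrightarrow>
     (\<forall>k k' A A' i j. graph_tensor n k A \<longrightarrow> graph_tensor n k' A' \<longrightarrow>
        i \<in> {1..n} \<longrightarrow> j \<in> {1..n} \<longrightarrow>
        (GNN i A = GNN j A' \<longleftrightarrow> set_iso n {i} A {j} A'))"

definition stack :: "gtensor \<Rightarrow> gtensor \<Rightarrow> gtensor" where
  "stack A L = (\<lambda>i j. A i j @ L i j)"

definition labeling_trick :: "nat \<Rightarrow> nat \<Rightarrow> (nat set \<Rightarrow> gtensor \<Rightarrow> gtensor) \<Rightarrow> bool" where
  "labeling_trick n d L \<longleftrightarrow>
     (\<forall>S A k. S \<subseteq> {1..n} \<longrightarrow> graph_tensor n k A \<longrightarrow> is_tensor n d (L S A)) \<and>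
     (\<forall>S A S' A' k k' \<pi>. S \<subseteq> {1..n} \<longrightarrow> S' \<subseteq> {1..n} \<longrightarrow>
        graph_tensor n k A \<longrightarrow> graph_tensor n k' A' \<longrightarrow> \<pi> permutes {1..n} \<longrightarrow>
        (L S A = perm_tensor \<pi> (L S' A') \<longrightarrow> S = \<pi> ` S') \<and>
        (S = \<pi> ` S' \<and> A = perm_tensor \<pi> A' \<longrightarrow> L S A = perm_tensor \<pi> (L S' A')))"

definition labeled :: "(nat set \<Rightarrow> gtensor \<Rightarrow> gtensor) \<Rightarrow> nat set \<Rightarrow> gtensor \<Rightarrow> gtensor" where
  "labeled L S A = stack A (L S A)"

definition set_gnn :: "('r multiset \<Rightarrow> 'o) \<Rightarrow> (nat \<Rightarrow> gtensor \<Rightarrow> 'r) \<Rightarrow> nat set \<Rightarrow> gtensor \<Rightarrow> 'o" where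
  "set_gnn AGG GNN S A' = AGG (image_mset (\<lambda>i. GNN i A') (mset_set S))"

end

theory Submission
  imports Defs
begin

lemma inv_perm_in:
  assumes "\<pi> permutes {1..n}"
  shows "inv \<pi> i \<in> {1..n} \<longleftrightarrow> i \<in> {1..n}"
  using permutes_inv[OF assms] permutes_in_image by metis

lemma is_tensor_perm:
  assumes "is_tensor n k A" "\<pi> permutes {1..n}"
  shows "is_tensor n k (perm_tensor \<pi> A)"
  unfolding is_tensor_def perm_tensor_def
proof (intro allI conjI impI)
  fix i j :: nat
  have a1: "\<And>i j. i \<in> {1..n} \<and> j \<in> {1..n} \<Longrightarrow> length (A i j) = k"
   and a2: "\<And>i j. \<not> (i \<in> {1..n} \<and> j \<in> {1..n}) \<Longrightarrow> A i j = []"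
    using assms(1) unfolding is_tensor_def by blast+
  note h = inv_perm_in[OF assms(2)]
  show "length (A (inv \<pi> i) (inv \<pi> j)) = k" if "i \<in> {1..n} \<and> j \<in> {1..n}"
    using a1 h that by presburger
  show "A (inv \<pi> i) (inv \<pi> j) = []" if "\<not> (i \<in> {1..n} \<and> j \<in> {1..n})"
    using a2 h that by presburger
qed

lemma graph_tensor_perm:
  assumes "graph_tensor n k A" "\<pi> permutes {1..n}"
  shows "graph_tensor n k (perm_tensor \<pi> A)"
proof -
  have k: "1 \<le> k" and t: "is_tensor n k A"
   and e: "\<And>i j. i \<in> {1..n} \<Longrightarrow> j \<in> {1..n} \<Longrightarrow> A i j ! 0 \<in> {0, 1}"
    using assms(1) unfolding graph_tensor_def by blast+
  have t2: "is_tensor n k (perm_tensor \<pi> A)" using is_tensor_perm[OF t assms(2)] .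
  have e2: "perm_tensor \<pi> A i j ! 0 \<in> {0, 1}" if "i \<in> {1..n}" "j \<in> {1..n}" for i j
  proof -
    have "inv \<pi> i \<in> {1..n}" "inv \<pi> j \<in> {1..n}" using that inv_perm_in[OF assms(2)] by blast+
    then show ?thesis unfolding perm_tensor_def using e by blast
  qed
  show ?thesis unfolding graph_tensor_def using k t2 e2 by blast
qed

lemma graph_tensor_stack:
  assumes "graph_tensor n k A" "is_tensor n d B"
  shows "graph_tensor n (k+d) (stack A B)"
proof -
  have k: "1 \<le> k" and t: "is_tensor n k A"
   and e: "\<And>i j. i \<in> {1..n} \<Longrightarrow> j \<in> {1..n} \<Longrightarrow> A i j ! 0 \<in> {0, 1}"
    using assms(1) unfolding graph_tensor_def by blast+
  have a1: "\<And>i j. i \<in> {1..n} \<and> j \<in> {1..n} \<Longrightarrow> length (A i j) = k"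
   and a2: "\<And>i j. \<not> (i \<in> {1..n} \<and> j \<in> {1..n}) \<Longrightarrow> A i j = []"
    using t unfolding is_tensor_def by blast+
  have b1: "\<And>i j. i \<in> {1..n} \<and> j \<in> {1..n} \<Longrightarrow> length (B i j) = d"
   and b2: "\<And>i j. \<not> (i \<in> {1..n} \<and> j \<in> {1..n}) \<Longrightarrow> B i j = []"
    using assms(2) unfolding is_tensor_def by blast+
  have "is_tensor n (k+d) (stack A B)"
    unfolding is_tensor_def stack_def
  proof (intro allI conjI impI)
    fix i j
    show "length (A i j @ B i j) = k + d" if "i \<in> {1..n} \<and> j \<in> {1..n}"
      using a1[OF that] b1[OF that] by simp
    show "A i j @ B i j = []" if "\<not> (i \<in> {1..n} \<and> j \<in> {1..n})"
      using a2[OF that] b2[OF that] by simp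
  qed
  moreover have "stack A B i j ! 0 \<in> {0, 1}" if "i \<in> {1..n}" "j \<in> {1..n}" for i j
  proof -
    have "length (A i j) = k" using a1 that by blast
    then show ?thesis using e[OF that] k unfolding stack_def by (simp add: nth_append)
  qed
  ultimately show ?thesis unfolding graph_tensor_def using k by simp
qed

lemma lt1:
  assumes "labeling_trick n d L" "S \<subseteq> {1..n}" "graph_tensor n k A"
  shows "is_tensor n d (L S A)"
proof -
  have "\<forall>S A k. S \<subseteq> {1..n} \<longrightarrow> graph_tensor n k A \<longrightarrow> is_tensor n d (L S A)"
    using assms(1) unfolding labeling_trick_def by (rule conjunct1)
  then show ?thesis using assms(2,3) by blast
qed

lemma lt23:
  assumes "labeling_trick n d L" "S \<subseteq> {1..n}" "S' \<subseteq> {1..n}"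
    "graph_tensor n k A" "graph_tensor n k' A'" "\<pi> permutes {1..n}"
  shows "(L S A = perm_tensor \<pi> (L S' A') \<longrightarrow> S = \<pi> ` S') \<and>
        (S = \<pi> ` S' \<and> A = perm_tensor \<pi> A' \<longrightarrow> L S A = perm_tensor \<pi> (L S' A'))"
proof -
  have H: "\<forall>S A S' A' k k' \<pi>. S \<subseteq> {1..n} \<longrightarrow> S' \<subseteq> {1..n} \<longrightarrow>
        graph_tensor n k A \<longrightarrow> graph_tensor n k' A' \<longrightarrow> \<pi> permutes {1..n} \<longrightarrow>
        (L S A = perm_tensor \<pi> (L S' A') \<longrightarrow> S = \<pi> ` S') \<and>
        (S = \<pi> ` S' \<and> A = perm_tensor \<pi> A' \<longrightarrow> L S A = perm_tensor \<pi> (L S' A'))"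
    using assms(1) unfolding labeling_trick_def by (rule conjunct2)
  show ?thesis
    using H[rule_format, OF assms(2-6)] .
qed

lemma lt2: "labeling_trick n d L \<Longrightarrow> S \<subseteq> {1..n} \<Longrightarrow> S' \<subseteq> {1..n} \<Longrightarrow>
  graph_tensor n k A \<Longrightarrow> graph_tensor n k' A' \<Longrightarrow> \<pi> permutes {1..n} \<Longrightarrow>
  L S A = perm_tensor \<pi> (L S' A') \<Longrightarrow> S = \<pi> ` S'"
  by (drule (5) lt23, erule conjE, erule mp)

lemma lt3: "labeling_trick n d L \<Longrightarrow> S \<subseteq> {1..n} \<Longrightarrow> S' \<subseteq> {1..n} \<Longrightarrow>
  graph_tensor n k A \<Longrightarrow> graph_tensor n k' A' \<Longrightarrow> \<pi> permutes {1..n} \<Longrightarrow>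
  S = \<pi> ` S' \<Longrightarrow> A = perm_tensor \<pi> A' \<Longrightarrow> L S A = perm_tensor \<pi> (L S' A')"
  by (drule (5) lt23, erule conjE, erule mp, rule conjI)

lemma perm_stack: "perm_tensor \<pi> (stack A B) = stack (perm_tensor \<pi> A) (perm_tensor \<pi> B)"
  unfolding perm_tensor_def stack_def by simp

lemma nme:
  assumes "node_most_expressive n GNN" "graph_tensor n k A" "graph_tensor n k' A'"
    "i \<in> {1..n}" "j \<in> {1..n}"
  shows "(GNN i A = GNN j A') = set_iso n {i} A {j} A'"
proof -
  have H: "\<forall>k k' A A' i j. graph_tensor n k A \<longrightarrow> graph_tensor n k' A' \<longrightarrow>
        i \<in> {1..n} \<longrightarrow> j \<in> {1..n} \<longrightarrow>
        (GNN i A = GNN j A' \<longleftrightarrow> set_iso n {i} A {j} A')"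
    using assms(1) unfolding node_most_expressive_def .
  show ?thesis using H[rule_format, OF assms(2-5)] .
qed
  
lemma gnn_inv:
  assumes "node_most_expressive n GNN" "graph_tensor n k B" "\<pi> permutes {1..n}" "j \<in> {1..n}"
  shows "GNN (\<pi> j) (perm_tensor \<pi> B) = GNN j B"
proof -
  have "\<pi> j \<in> {1..n}" using assms(3,4) permutes_in_image by metis
  moreover have "set_iso n {\<pi> j} (perm_tensor \<pi> B) {j} B"
    unfolding set_iso_def using assms(3) by auto
  ultimately show ?thesis using nme[OF assms(1) graph_tensor_perm[OF assms(2,3)] assms(2) _ assms(4)]
    by blast
qed

lemma split_stack:
  assumes "is_tensor n k A" "is_tensor n d LA" "is_tensor n k' A'" "is_tensor n d LA'"
    "\<pi> permutes {1..n}" "1 \<le> n"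
    "stack A LA = perm_tensor \<pi> (stack A' LA')"
  shows "A = perm_tensor \<pi> A' \<and> LA = perm_tensor \<pi> LA'"
proof -
  have eq: "A i j @ LA i j = A' (inv \<pi> i) (inv \<pi> j) @ LA' (inv \<pi> i) (inv \<pi> j)" for i j
    using assms(7) unfolding stack_def perm_tensor_def by metis
  have 1: "(1::nat) \<in> {1..n}" using assms(6) by simp
  have "inv \<pi> 1 \<in> {1..n}" using inv_perm_in[OF assms(5)] 1 by blast
  hence "k + d = k' + d" using eq[of 1 1] assms(1-4) 1 unfolding is_tensor_def
    by (metis length_append)
  hence kk: "k = k'" by simp
  have "A i j = A' (inv \<pi> i) (inv \<pi> j) \<and> LA i j = LA' (inv \<pi> i) (inv \<pi> j)" for i j
  proof (cases "i \<in> {1..n} \<and> j \<in> {1..n}")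
    case True
    hence "inv \<pi> i \<in> {1..n} \<and> inv \<pi> j \<in> {1..n}" using inv_perm_in[OF assms(5)] by blast
    hence "length (A i j) = length (A' (inv \<pi> i) (inv \<pi> j))"
      using True assms(1,3) kk unfolding is_tensor_def by metis
    then show ?thesis using eq[of i j] by simp
  next
    case False
    hence "\<not> (inv \<pi> i \<in> {1..n} \<and> inv \<pi> j \<in> {1..n})" using inv_perm_in[OF assms(5)] by blast
    have z: "\<And>B m. is_tensor n m B \<Longrightarrow> \<not> (x \<in> {1..n} \<and> y \<in> {1..n}) \<Longrightarrow> B x y = []" for x y
      unfolding is_tensor_def by blast
    show ?thesis using z[OF assms(1) False] z[OF assms(2) False]
      z[OF assms(3) \<open>\<not> (inv \<pi> i \<in> {1..n} \<and> inv \<pi> j \<in> {1..n})\<close>]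
      z[OF assms(4) \<open>\<not> (inv \<pi> i \<in> {1..n} \<and> inv \<pi> j \<in> {1..n})\<close>] by simp
  qed
  then show ?thesis unfolding perm_tensor_def by (simp add: fun_eq_iff)
qed

theorem theorem1:
  fixes GNN :: "nat \<Rightarrow> gtensor \<Rightarrow> 'r" and AGG :: "'r multiset \<Rightarrow> 'o"
    and L :: "nat set \<Rightarrow> gtensor \<Rightarrow> gtensor"
  assumes "node_most_expressive n GNN"
    and "inj AGG"
    and "labeling_trick n d L"
    and "graph_tensor n k A" and "graph_tensor n k' A'"
    and "S \<subseteq> {1..n}" and "S' \<subseteq> {1..n}" and "S \<noteq> {}" and "S' \<noteq> {}"
  shows "set_gnn AGG GNN S (labeled L S A) = set_gnn AGG GNN S' (labeled L S' A')
           \<longleftrightarrow> set_iso n S A S' A'"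
proof -
  have LT: "is_tensor n d (L S A)" "is_tensor n d (L S' A')"
    using lt1[OF assms(3)] assms(4-7) by blast+
  have G: "graph_tensor n (k+d) (labeled L S A)" "graph_tensor n (k'+d) (labeled L S' A')"
    using graph_tensor_stack LT assms(4,5) unfolding labeled_def by auto
  have finS': "finite S'" using assms(7) finite_subset by blast
  show ?thesis
  proof
    assume h: "set_gnn AGG GNN S (labeled L S A) = set_gnn AGG GNN S' (labeled L S' A')"
    hence M: "image_mset (\<lambda>i. GNN i (labeled L S A)) (mset_set S) =
              image_mset (\<lambda>i. GNN i (labeled L S' A')) (mset_set S')"
      using assms(2) unfolding set_gnn_def inj_def by blast
    obtain i where i: "i \<in> S" using assms(8) by blast
    have finS: "finite S" using assms(6) finite_subset by blast
    have "GNN i (labeled L S A) \<in># image_mset (\<lambda>i. GNN i (labeled L S A)) (mset_set S)"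
      using i finS by simp
    hence "GNN i (labeled L S A) \<in># image_mset (\<lambda>i. GNN i (labeled L S' A')) (mset_set S')"
      using M by simp
    then obtain j where j: "j \<in> S'" "GNN i (labeled L S A) = GNN j (labeled L S' A')"
      using finS' by auto
    have "set_iso n {i} (labeled L S A) {j} (labeled L S' A')"
      using nme[OF assms(1) G] j i assms(6,7) by blast
    then obtain \<pi> where p: "\<pi> permutes {1..n}" "labeled L S A = perm_tensor \<pi> (labeled L S' A')"
      unfolding set_iso_def by blast
    have n1: "1 \<le> n" using i assms(6) by auto
    have "A = perm_tensor \<pi> A' \<and> L S A = perm_tensor \<pi> (L S' A')"
    proof -
      have "is_tensor n k A" "is_tensor n k' A'" using assms(4,5) unfolding graph_tensor_def by simp_all
      note t = this
      have "stack A (L S A) = perm_tensor \<pi> (stack A' (L S' A'))" using p(2) unfolding labeled_def .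
      from split_stack[OF t(1) LT(1) t(2) LT(2) p(1) n1 this] show ?thesis .
    qed
    moreover have "S = \<pi> ` S'" using lt2[OF assms(3,6,7,4,5) p(1)] calculation by blast
    ultimately show "set_iso n S A S' A'" unfolding set_iso_def using p(1) by blast
  next
    assume "set_iso n S A S' A'"
    then obtain \<pi> where p: "\<pi> permutes {1..n}" "S = \<pi> ` S'" "A = perm_tensor \<pi> A'"
      unfolding set_iso_def by blast
    have "L S A = perm_tensor \<pi> (L S' A')"
      using lt3[OF assms(3,6,7,4,5) p] .
    hence lab: "labeled L S A = perm_tensor \<pi> (labeled L S' A')"
      unfolding labeled_def using p(3) perm_stack by metis
    have inj: "inj_on \<pi> S'" using permutes_inj[OF p(1)] inj_on_subset by blast
    have "image_mset (\<lambda>i. GNN i (labeled L S A)) (mset_set S)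
        = image_mset (\<lambda>i. GNN i (labeled L S A)) (image_mset \<pi> (mset_set S'))"
      using p(2) image_mset_mset_set[OF inj] by simp
    also have "\<dots> = image_mset (\<lambda>j. GNN (\<pi> j) (perm_tensor \<pi> (labeled L S' A'))) (mset_set S')"
      by (simp add: multiset.map_comp comp_def lab)
    also have "\<dots> = image_mset (\<lambda>j. GNN j (labeled L S' A')) (mset_set S')"
    proof (rule image_mset_cong)
      fix j assume "j \<in># mset_set S'"
      hence "j \<in> {1..n}" using finS' assms(7) by auto
      then show "GNN (\<pi> j) (perm_tensor \<pi> (labeled L S' A')) = GNN j (labeled L S' A')"
        using gnn_inv[OF assms(1) G(2) p(1)] by blast
    qed
    finally show "set_gnn AGG GNN S (labeled L S A) = set_gnn AGG GNN S' (labeled L S' A')"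
      unfolding set_gnn_def by simp
  qed
qed

end
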